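(* For any finite simple graph $X$ and any update sequence $\pi\in S_X$ there exists a bijection $\psi:\mathcal{S}\to\mathcal{S}$ such that $\psi\circ\mathbf{F}^\uparrow_\pi=\mathbf{F}^\downarrow_\pi\circ\psi$; that is, $\mathbf{F}^\uparrow_\pi$ and $\mathbf{F}^\downarrow_\pi$ are topologically conjugate (their phase spaces are isomorphic as directed graphs).
   Context: Let $X$ be a finite simple graph with vertices $1,\dots,n$; $d(v)$ is the degree of $v$ and $n[v]$ the closed neighborhood of $v$. An extended vertex state is $s_v=(x_v,k_v)\in\{0,1\}\times\{1,\dots,d(v)+1\}$; $\mathcal{S}=\prod_v(\{0,1\}\times\{1,\dots,d(v)+1\})$. Let $\sigma(x[v])=|\{u\in n[v]:x_u=1\}|$. Both vertex functions set $x_v'=1$ iff $\sigma(x[v])\ge k_v$ (else $0$). Increasing: $k_v'=k_v+1$ if $x_v=0$ and $\sigma(x[v])\ge k_v$, else $k_v'=k_v$. Decreasing: $k_v'=k_v-1$ if $x_v=1$ and $\sigma(x[v])<k_v$, else $k_v'=k_v$. The local maps $F^\uparrow_v,F^\downarrow_v:\mathcal{S}\to\mathcal{S}$ update only coordinate $v$ by the respective rule. For a permutation $\pi=(\pi_1,\dots,\pi_n)$ of the vertices, $\mathbf{F}^\star_\pi=F^\star_{\pi_n}\circ\cdots\circ F^\star_{\pi_1}$ for $\star\in\{\uparrow,\downarrow\}$. *)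

theory Defs
  imports Main
begin

definition simple_graph :: "'a set \<Rightarrow> ('a \<Rightarrow> 'a \<Rightarrow> bool) \<Rightarrow> bool" where
  "simple_graph V E \<longleftrightarrow> finite V \<and> (\<forall>u v. E u v \<longrightarrow> u \<in> V \<and> v \<in> V)
     \<and> (\<forall>u v. E u v \<longrightarrow> E v u) \<and> (\<forall>v. \<not> E v v)"

definition deg :: "'a set \<Rightarrow> ('a \<Rightarrow> 'a \<Rightarrow> bool) \<Rightarrow> 'a \<Rightarrow> nat" where
  "deg V E v = card {u \<in> V. E v u}"

definition closed_nbhd :: "'a set \<Rightarrow> ('a \<Rightarrow> 'a \<Rightarrow> bool) \<Rightarrow> 'a \<Rightarrow> 'a set" where
  "closed_nbhd V E v = insert v {u \<in> V. E v u}"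

text \<open>A state assigns to each vertex a pair (x_v, k_v); x_v is encoded as a bool (True = 1).\<close>
type_synonym 'a state = "'a \<Rightarrow> bool \<times> nat"

definition sigma :: "'a set \<Rightarrow> ('a \<Rightarrow> 'a \<Rightarrow> bool) \<Rightarrow> 'a state \<Rightarrow> 'a \<Rightarrow> nat" where
  "sigma V E s v = card {u \<in> closed_nbhd V E v. fst (s u)}"

text \<open>The extended state space; states are extensional (fixed default outside V).\<close>
definition state_space :: "'a set \<Rightarrow> ('a \<Rightarrow> 'a \<Rightarrow> bool) \<Rightarrow> 'a state set" where
  "state_space V E = {s. (\<forall>v\<in>V. 1 \<le> snd (s v) \<and> snd (s v) \<le> deg V E v + 1)
                         \<and> (\<forall>v. v \<notin> V \<longrightarrow> s v = (False, 0))}"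

definition F_up :: "'a set \<Rightarrow> ('a \<Rightarrow> 'a \<Rightarrow> bool) \<Rightarrow> 'a \<Rightarrow> 'a state \<Rightarrow> 'a state" where
  "F_up V E v s = (let (x, k) = s v; \<sigma> = sigma V E s v in
     s(v := (k \<le> \<sigma>, if \<not> x \<and> k \<le> \<sigma> then k + 1 else k)))"

definition F_down :: "'a set \<Rightarrow> ('a \<Rightarrow> 'a \<Rightarrow> bool) \<Rightarrow> 'a \<Rightarrow> 'a state \<Rightarrow> 'a state" where
  "F_down V E v s = (let (x, k) = s v; \<sigma> = sigma V E s v in
     s(v := (k \<le> \<sigma>, if x \<and> \<sigma> < k then k - 1 else k)))"

text \<open>Sequential composition: for pi = [pi_1,...,pi_n], F_{pi_n} o ... o F_{pi_1}.\<close>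
definition seq_map :: "('a \<Rightarrow> 'a state \<Rightarrow> 'a state) \<Rightarrow> 'a list \<Rightarrow> 'a state \<Rightarrow> 'a state" where
  "seq_map F \<pi> = fold F \<pi>"

end

theory Submission
  imports Defs
begin

definition psi :: "'a set \<Rightarrow> ('a \<Rightarrow> 'a \<Rightarrow> bool) \<Rightarrow> 'a state \<Rightarrow> 'a state" where
  "psi V E s = (\<lambda>u. if u \<in> V then (\<not> fst (s u), deg V E u + 2 - snd (s u)) else s u)"

definition Inv :: "'a set \<Rightarrow> ('a \<Rightarrow> 'a \<Rightarrow> bool) \<Rightarrow> 'a state set" where
  "Inv V E = {s. \<forall>v\<in>V. snd (s v) \<le> deg V E v + 1}"

lemma nbhd_facts:
  assumes g: "simple_graph V E" and v: "v \<in> V"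
  shows "closed_nbhd V E v \<subseteq> V" "finite (closed_nbhd V E v)"
    "card (closed_nbhd V E v) = deg V E v + 1"
proof -
  have fin: "finite V" using g by (simp add: simple_graph_def)
  show "closed_nbhd V E v \<subseteq> V" using v by (auto simp: closed_nbhd_def)
  then show "finite (closed_nbhd V E v)" using fin finite_subset by blast
  have "v \<notin> {u \<in> V. E v u}" using g by (simp add: simple_graph_def)
  then show "card (closed_nbhd V E v) = deg V E v + 1"
    using fin by (simp add: closed_nbhd_def deg_def)
qed

lemma sigma_le:
  assumes g: "simple_graph V E" and v: "v \<in> V"
  shows "sigma V E s v \<le> deg V E v + 1"
    and "\<not> fst (s v) \<Longrightarrow> sigma V E s v \<le> deg V E v"
proof -
  note nf = nbhd_facts[OF g v]
  have sub: "{u \<in> closed_nbhd V E v. fst (s u)} \<subseteq> closed_nbhd V E v" by auto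
  show "sigma V E s v \<le> deg V E v + 1"
    unfolding sigma_def using card_mono[OF nf(2) sub] nf(3) by simp
  assume nx: "\<not> fst (s v)"
  have vin: "v \<in> closed_nbhd V E v" by (simp add: closed_nbhd_def)
  have sub2: "{u \<in> closed_nbhd V E v. fst (s u)} \<subseteq> closed_nbhd V E v - {v}" using nx by auto
  have "card (closed_nbhd V E v - {v}) = deg V E v" using nf(3) vin nf(2) by simp
  then show "sigma V E s v \<le> deg V E v"
    unfolding sigma_def using card_mono[OF _ sub2] nf(2) by simp
qed

lemma sigma_psi:
  assumes g: "simple_graph V E" and v: "v \<in> V"
  shows "sigma V E (psi V E s) v = deg V E v + 1 - sigma V E s v"
proof -
  note nf = nbhd_facts[OF g v]
  let ?N = "closed_nbhd V E v"
  have "{u \<in> ?N. fst (psi V E s u)} = ?N - {u \<in> ?N. fst (s u)}"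
    using nf(1) by (auto simp: psi_def)
  moreover have "card (?N - {u \<in> ?N. fst (s u)}) = card ?N - card {u \<in> ?N. fst (s u)}"
    by (rule card_Diff_subset) (use nf(2) finite_subset in auto)
  ultimately show ?thesis using nf(3) by (simp add: sigma_def)
qed

lemma local_comm:
  assumes g: "simple_graph V E" and v: "v \<in> V" and s: "s \<in> Inv V E"
  shows "psi V E (F_up V E v s) = F_down V E v (psi V E s)"
proof
  fix u
  show "psi V E (F_up V E v s) u = F_down V E v (psi V E s) u"
  proof (cases "u = v")
    case False
    then show ?thesis by (simp add: psi_def F_up_def F_down_def Let_def case_prod_beta)
  next
    case True
    obtain x k where sv: "s v = (x, k)" by fastforce
    have kle: "k \<le> deg V E v + 1" using s v sv by (auto simp: Inv_def)
    have sp: "sigma V E (psi V E s) v = deg V E v + 1 - sigma V E s v" by (rule sigma_psi[OF g v])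
    have sl: "sigma V E s v \<le> deg V E v + 1" by (rule sigma_le[OF g v])
    have sl2: "\<not> x \<Longrightarrow> sigma V E s v \<le> deg V E v" using sigma_le(2)[OF g v, of s] sv by simp
    have pv: "psi V E s v = (\<not> x, deg V E v + 2 - k)" using v sv by (simp add: psi_def)
    show ?thesis using True v sv pv sp kle sl sl2
      by (auto simp: psi_def F_up_def F_down_def Let_def)
  qed
qed

lemma up_Inv:
  assumes g: "simple_graph V E" and v: "v \<in> V" and s: "s \<in> Inv V E"
  shows "F_up V E v s \<in> Inv V E"
proof -
  obtain x k where sv: "s v = (x, k)" by fastforce
  have kle: "k \<le> deg V E v + 1" using s v sv by (auto simp: Inv_def)
  have sl2: "\<not> x \<Longrightarrow> sigma V E s v \<le> deg V E v" using sigma_le(2)[OF g v, of s] sv by simp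
  show ?thesis using s sv kle sl2 by (auto simp: Inv_def F_up_def Let_def)
qed

lemma fold_comm:
  assumes g: "simple_graph V E"
  shows "set \<pi> \<subseteq> V \<Longrightarrow> s \<in> Inv V E \<Longrightarrow>
    psi V E (fold (F_up V E) \<pi> s) = fold (F_down V E) \<pi> (psi V E s)"
proof (induction \<pi> arbitrary: s)
  case Nil then show ?case by simp
next
  case (Cons a \<pi>)
  have a: "a \<in> V" using Cons.prems by simp
  have "psi V E (fold (F_up V E) \<pi> (F_up V E a s)) = fold (F_down V E) \<pi> (psi V E (F_up V E a s))"
    using Cons.IH Cons.prems up_Inv[OF g a] by simp
  then show ?case using local_comm[OF g a Cons.prems(2)] by simp
qed

theorem proposition3p4:
  fixes V :: "'a set" and E :: "'a \<Rightarrow> 'a \<Rightarrow> bool" and \<pi> :: "'a list"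
  assumes "simple_graph V E"
    and "distinct \<pi>" and "set \<pi> = V"
  shows "\<exists>\<psi>. bij_betw \<psi> (state_space V E) (state_space V E)
           \<and> (\<forall>s\<in>state_space V E.
                \<psi> (seq_map (F_up V E) \<pi> s) = seq_map (F_down V E) \<pi> (\<psi> s))"
proof (intro exI conjI ballI)
  have maps: "psi V E s \<in> state_space V E" if "s \<in> state_space V E" for s
    using that by (auto simp: state_space_def psi_def)
  have inv: "psi V E (psi V E s) = s" if "s \<in> state_space V E" for s
  proof
    fix u show "psi V E (psi V E s) u = s u"
      using that by (cases "s u") (auto simp: state_space_def psi_def)
  qed
  show "bij_betw (psi V E) (state_space V E) (state_space V E)"
    by (rule bij_betw_byWitness[where f'="psi V E"]) (use maps inv in auto)
  fix s assume "s \<in> state_space V E"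
  then have "s \<in> Inv V E" by (auto simp: state_space_def Inv_def)
  then show "psi V E (seq_map (F_up V E) \<pi> s) = seq_map (F_down V E) \<pi> (psi V E s)"
    using fold_comm[OF assms(1)] assms(3) by (simp add: seq_map_def)
qed

end
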